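(* Let $n\ge1$ be an integer. The following are equivalent: (a) $n\le3$; (b) for every $j\in\{1,\dots,n+2\}$, the function $\lambda\mapsto\lambda_{n,j}(\lambda)-1/n$ does not change sign on the interval $(1/n,\infty)$.
   Context: For an integer $n\ge1$ let $f_n(x)=(1+x)^{n+1}/x$ for $x>0$. The function $f_n$ is strictly decreasing on $(0,1/n]$ and strictly increasing on $[1/n,\infty)$. Regular graph exponents (Schmidt–Summerer), defined algebraically. For $\lambda\in[1/n,\infty)$ let $\mu\in(0,1/n]$ be the unique solution of $f_n(\mu)=f_n(\lambda)$, and set $$\lambda_{n,j}(\lambda)=\lambda^{1-\frac{j-1}{n+1}}\mu^{\frac{j-1}{n+1}},\qquad 1\le j\le n+2 .$$ All ratios $\lambda_{n,j}/\lambda_{n,j+1}$ are equal. These are the exponents $\lambda_{n,j}$ of the regular graph in dimension $n$ with parameter $\lambda_n=\lambda$. *)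

theory Defs
  imports Complex_Main
begin

definition f_reg :: "nat \<Rightarrow> real \<Rightarrow> real" where
  "f_reg n x = (1 + x) ^ (n + 1) / x"

definition mu_reg :: "nat \<Rightarrow> real \<Rightarrow> real" where
  "mu_reg n lam = (THE m. 0 < m \<and> m \<le> 1 / real n \<and> f_reg n m = f_reg n lam)"

definition lambda_reg :: "nat \<Rightarrow> nat \<Rightarrow> real \<Rightarrow> real" where
  "lambda_reg n j lam =
     lam powr (1 - (real j - 1) / (real n + 1)) * (mu_reg n lam) powr ((real j - 1) / (real n + 1))"

end

theory Submission
  imports Defs
begin

definition Sg :: "nat \<Rightarrow> real \<Rightarrow> real" where "Sg n q = (\<Sum>i<n. q^i)"

lemma Sg_ge: assumes "q \<ge> 1" shows "real n \<le> Sg n q"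
proof -
  have "(\<Sum>i<n. 1::real) \<le> (\<Sum>i<n. q^i)" by (intro sum_mono) (simp add: assms one_le_power)
  then show ?thesis by (simp add: Sg_def)
qed

lemma Sg_le: assumes "q \<ge> 1" shows "Sg n q \<le> real n * q^(n-1)"
proof -
  have "(\<Sum>i<n. q^i) \<le> (\<Sum>i<n. q^(n-1))"
    by (intro sum_mono) (auto intro: power_increasing simp: assms)
  then show ?thesis by (simp add: Sg_def)
qed

lemma Sg_lt: assumes "q > 1" "n \<ge> 1" shows "Sg n q < real n * q^n"
proof -
  have "(\<Sum>i<n. q^i) < (\<Sum>i<n. q^n)"
    using assms by (intro sum_strict_mono) (auto intro: power_strict_increasing simp: lessThan_empty_iff)
  then show ?thesis by (simp add: Sg_def)
qed

lemma Sg_shift1: "q * Sg n q + 1 = Sg (Suc n) q"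
  unfolding Sg_def sum.lessThan_Suc_shift by (simp add: sum_distrib_left)

lemma Sg_shift2: "Sg n q + q^n = Sg (Suc n) q"
  unfolding Sg_def by simp

lemma f_eq:
  assumes q: "q > 1" and n: "n \<ge> 1"
  shows "f_reg n (1/(q*Sg n q)) = f_reg n (q^n / Sg n q)"
proof -
  define S where "S = Sg n q"
  define T where "T = Sg (Suc n) q"
  have S: "S > 0" using Sg_ge[of q n] q n unfolding S_def by simp
  have e1: "1 + 1/(q*S) = T/(q*S)" using Sg_shift1[of q n] q S unfolding S_def T_def by (simp add: field_simps)
  have e2: "1 + q^n/S = T/S" using Sg_shift2[of n q] S unfolding S_def T_def by (simp add: field_simps)
  show ?thesis unfolding f_reg_def S_def[symmetric] e1 e2
    using q S by (simp add: power_divide field_simps power_mult_distrib)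
qed

lemma f_deriv: assumes "x > 0"
  shows "DERIV (f_reg n) x :> (1+x)^n*(real n*x-1)/x^2"
proof -
  have d1: "DERIV (\<lambda>x. (1+x)^(Suc n)) x :> real (Suc n) * 1 * (1+x)^(Suc n - Suc 0)"
    by (intro DERIV_power derivative_eq_intros) auto
  have d2: "DERIV (\<lambda>x. (1+x)^(Suc n) / x) x :>
      ((real (Suc n) * 1 * (1+x)^(Suc n - Suc 0)) * x - (1+x)^(Suc n) * 1) / (x * x)"
    by (rule DERIV_divide[OF d1 DERIV_ident]) (use assms in simp)
  have e: "((real (Suc n) * 1 * (1+x)^(Suc n - Suc 0)) * x - (1+x)^(Suc n) * 1) / (x * x)
      = (1+x)^n*(real n*x-1)/x^2"
    by (simp add: power2_eq_square algebra_simps)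
  show ?thesis using d2 unfolding e f_reg_def[abs_def] by simp
qed

lemma f_mono:
  assumes "0 < x" "x < y" "y \<le> 1 / real n"
  shows "f_reg n x > f_reg n y"
proof (rule DERIV_neg_imp_decreasing_open[OF assms(2)])
  fix z assume z: "x < z" "z < y"
  have "real n * z < 1"
  proof (cases "n = 0")
    case False
    then have "z < 1 / real n" using z assms by simp
    then show ?thesis using False by (simp add: field_simps)
  qed simp
  then show "\<exists>d. DERIV (f_reg n) z :> d \<and> d < 0"
    using f_deriv[of z n] z assms
    by (intro exI[of _ "(1+z)^n*(real n*z-1)/z^2"]) (auto intro!: divide_neg_pos mult_pos_neg)
next
  show "continuous_on {x..y} (f_reg n)"
    unfolding f_reg_def[abs_def] using assms by (intro continuous_intros) auto
qed

lemma mu_unique: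
  assumes "0 < m" "m \<le> 1 / real n" "f_reg n m = f_reg n lam"
  shows "mu_reg n lam = m"
  unfolding mu_reg_def
proof (rule the_equality)
  show "0 < m \<and> m \<le> 1 / real n \<and> f_reg n m = f_reg n lam" using assms by simp
  fix m' assume h: "0 < m' \<and> m' \<le> 1 / real n \<and> f_reg n m' = f_reg n lam"
  show "m' = m"
  proof (rule ccontr)
    assume "m' \<noteq> m"
    then consider "m' < m" | "m < m'" by linarith
    then show False
      using f_mono[of m' m n] f_mono[of m m' n] h assms by cases auto
  qed
qed


lemma lam_q:
  assumes q: "q > 1" and n: "n \<ge> 1" and j: "j \<ge> 1"
  shows "lambda_reg n j (q^n / Sg n q) = q^n / (Sg n q * q^(j-1))"
proof -
  define S where "S = Sg n q"
  define L where "L = q^n / S"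
  have S: "S > 0" "real n \<le> S" using Sg_ge[of q n] q n unfolding S_def by auto
  have L: "L > 0" using S q unfolding L_def by simp
  have qS: "real n \<le> q * S" using S q by (smt (verit) mult_le_cancel_right1)
  have mle: "1/(q*S) \<le> 1 / real n" using qS n by (simp add: frac_le)
  have mu: "mu_reg n L = 1/(q*S)"
    using mu_unique[OF _ mle f_eq[OF q n, folded S_def]] q S unfolding L_def by simp
  have m: "1/(q*S) = L / q powr real (n+1)"
  proof -
    have "q powr real (n+1) = q^(n+1)" by (rule powr_realpow) (use q in simp)
    then show ?thesis using q S unfolding L_def by (simp add: field_simps)
  qed
  define t where "t = (real j - 1) / (real n + 1)"
  have t: "real (n+1) * t = real (j-1)" using j unfolding t_def by (simp add: of_nat_diff add.commute)
  have "lambda_reg n j L = L powr (1 - t) * (L / q powr real (n+1)) powr t"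
    unfolding lambda_reg_def mu m t_def ..
  also have "\<dots> = L powr (1 - t) * L powr t / q powr (real (n+1) * t)"
    using L q by (simp add: powr_divide powr_powr)
  also have "\<dots> = L / q^(j-1)"
  proof -
    have "q powr (real (n+1) * t) = q^(j-1)" unfolding t by (rule powr_realpow) (use q in simp)
    moreover have "L powr (1 - t) * L powr t = L" using L by (simp add: powr_add[symmetric])
    ultimately show ?thesis by simp
  qed
  finally show ?thesis unfolding L_def S_def by simp
qed

lemma lam_gt:
  assumes q: "q > 1" and n: "n \<ge> 1"
  shows "q^n / Sg n q > 1 / real n"
proof -
  have S: "Sg n q > 0" using Sg_ge[of q n] q n by auto
  show ?thesis using Sg_lt[OF q n] S n by (simp add: field_simps)
qed

lemma surj_q:
  assumes n: "n \<ge> 1" and lam: "lam > 1 / real n"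
  shows "\<exists>q>1. lam = q^n / Sg n q"
proof -
  define Q where "Q = real n * lam"
  have Q1: "Q > 1" using lam n unfolding Q_def by (simp add: field_simps)
  have pos: "Sg n x > 0" if "x \<ge> 1" for x using Sg_ge[OF that, of n] n by auto
  have g1: "1^n / Sg n 1 \<le> lam" using lam unfolding Sg_def by simp
  have "Q^n / Sg n Q \<ge> Q^n / (real n * Q^(n-1))"
    using Sg_le[of Q n] pos[of Q] Q1 by (intro divide_left_mono) auto
  also have "Q^n / (real n * Q^(n-1)) = Q / real n"
  proof -
    obtain k where k: "n = Suc k" using n by (cases n) auto
    have "Q^n / (real n * Q^(n-1)) = (Q * Q^k) / (real n * Q^k)" using k by simp
    also have "\<dots> = Q / real n" using Q1 by (simp del: of_nat_Suc)
    finally show ?thesis .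
  qed
  also have "Q / real n = lam" using n unfolding Q_def by simp
  finally have g2: "lam \<le> Q^n / Sg n Q" .
  have "\<forall>x. 1 \<le> x \<and> x \<le> Q \<longrightarrow> isCont (\<lambda>q. q^n / Sg n q) x"
  proof (intro allI impI)
    fix x :: real assume "1 \<le> x \<and> x \<le> Q"
    then have "Sg n x \<noteq> 0" using pos by force
    then show "isCont (\<lambda>q. q^n / Sg n q) x" unfolding Sg_def by (intro continuous_intros) auto
  qed
  then obtain q where q: "1 \<le> q" "q \<le> Q" "q^n / Sg n q = lam"
    using IVT[of "\<lambda>q. q^n / Sg n q" 1 lam Q] g1 g2 Q1 by auto
  have "q \<noteq> 1" using q(3) lam unfolding Sg_def by auto
  then show ?thesis using q by (intro exI[of _ q]) auto
qed


definition V :: "nat \<Rightarrow> nat \<Rightarrow> real \<Rightarrow> real" where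
  "V n j q = q^n / (Sg n q * q^(j-1))"

lemma all_lam_iff:
  assumes n: "n \<ge> 1" and j: "j \<ge> 1"
  shows "(\<forall>lam > 1 / real n. P (lambda_reg n j lam)) \<longleftrightarrow> (\<forall>q>1. P (V n j q))"
proof
  assume h: "\<forall>lam > 1 / real n. P (lambda_reg n j lam)"
  show "\<forall>q>1. P (V n j q)"
  proof (intro allI impI)
    fix q :: real assume q: "q > 1"
    show "P (V n j q)" using h[rule_format, OF lam_gt[OF q n]] lam_q[OF q n j] unfolding V_def by simp
  qed
next
  assume h: "\<forall>q>1. P (V n j q)"
  show "\<forall>lam > 1 / real n. P (lambda_reg n j lam)"
  proof (intro allI impI)
    fix lam :: real assume lam: "lam > 1 / real n"
    obtain q where q: "q > 1" "lam = q^n / Sg n q" using surj_q[OF n lam] by blast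
    show "P (lambda_reg n j lam)" using h[rule_format, OF q(1)] lam_q[OF q(1) n j] q(2) unfolding V_def by simp
  qed
qed

lemma V_cmp:
  assumes q: "q > 1" and n: "n \<ge> 1"
  shows "V n j q \<ge> 1 / real n \<longleftrightarrow> Sg n q * q^(j-1) \<le> real n * q^n"
    and "V n j q \<le> 1 / real n \<longleftrightarrow> real n * q^n \<le> Sg n q * q^(j-1)"
proof -
  have S: "Sg n q > 0" using Sg_ge[of q n] q n by auto
  have p: "Sg n q * q^(j-1) > 0" using S q by simp
  show "V n j q \<ge> 1 / real n \<longleftrightarrow> Sg n q * q^(j-1) \<le> real n * q^n"
    unfolding V_def using p n by (simp add: field_simps)
  show "V n j q \<le> 1 / real n \<longleftrightarrow> real n * q^n \<le> Sg n q * q^(j-1)"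
    unfolding V_def using p n by (simp add: field_simps)
qed

lemma small_j:
  assumes q: "q > 1" and n: "n \<ge> 1" and j: "j \<le> 2"
  shows "Sg n q * q^(j-1) \<le> real n * q^n"
proof -
  have "q^(j-1) \<le> q^1" using q j by (intro power_increasing) auto
  moreover have "Sg n q \<le> real n * q^(n-1)" using Sg_le[of q n] q by simp
  moreover have "Sg n q \<ge> 0" using Sg_ge[of q n] q by simp
  ultimately have "Sg n q * q^(j-1) \<le> real n * q^(n-1) * q"
    using q by (intro mult_mono) auto
  also have "real n * q^(n-1) * q = real n * q^n" using n by (cases n) auto
  finally show ?thesis .
qed

lemma big_j:
  assumes q: "q > 1" and n: "n \<ge> 1" and j: "j \<ge> n+1"
  shows "real n * q^n \<le> Sg n q * q^(j-1)"
proof -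
  have "q^n \<le> q^(j-1)" using q j by (intro power_increasing) auto
  moreover have "real n \<le> Sg n q" using Sg_ge[of q n] q by simp
  ultimately show ?thesis using q by (intro mult_mono) auto
qed

lemma n3j3:
  assumes q: "q > 1"
  shows "real 3 * q^3 \<le> Sg 3 q * q^(3-1)"
proof -
  have "Sg 3 q = 1 + q + q^2" unfolding Sg_def by (simp add: numeral_eq_Suc)
  moreover have "3 * q \<le> 1 + q + q^2"
  proof -
    have "0 \<le> (q-1)*(q-1)" by simp
    moreover have "(q-1)*(q-1) = q*q - 2*q + 1" by (simp add: algebra_simps)
    ultimately show ?thesis by (simp add: power2_eq_square)
  qed
  ultimately show ?thesis using q
    using mult_right_mono[of "3*q" "1+q+q^2" "q^2"] by (simp add: power2_eq_square power3_eq_cube algebra_simps)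
qed

lemma big_n_neg:
  assumes n: "n \<ge> 4"
  shows "real n * (real n)^n < Sg n (real n) * (real n)^(3-1)"
proof -
  define q where "q = real n"
  have q: "q > 1" using n unfolding q_def by simp
  obtain k where k: "n = Suc k" using n by (cases n) auto
  have "Sg n q = Sg k q + q^k" using Sg_shift2[of k q] k by simp
  moreover have "Sg k q \<ge> real k" using Sg_ge[of q k] q by simp
  moreover have "real k \<ge> 1" using n k by simp
  ultimately have S: "Sg n q > q^k" by simp
  have "real n * q^n = q * q^(k-1) * q^2" unfolding q_def using n k
    by (cases k) (auto simp: power2_eq_square)
  also have "\<dots> = q^k * q^2" using n k by (cases k) auto
  also have "\<dots> < Sg n q * q^2" using S q by simp
  finally show ?thesis unfolding q_def by simp
qed

lemma big_n_pos:
  assumes n: "n \<ge> 4"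
  shows "\<exists>q>1. Sg n q * q^(3-1) < real n * q^n"
proof -
  define m where "m = n - 2"
  have m: "m \<ge> 2" "n = m + 2" using n unfolding m_def by auto
  define q :: real where "q = root m 2"
  have qm: "q^m = 2" unfolding q_def using m by simp
  have q1: "q > 1" unfolding q_def using m by simp
  have "q^2 \<le> q^m" using q1 m by (intro power_increasing) auto
  then have q2: "q*q \<le> 2" using qm by (simp add: power2_eq_square)
  have q32: "q < 3/2"
  proof (rule ccontr)
    assume "\<not> q < 3/2"
    then have "q*q \<ge> 3/2*(3/2)" by (intro mult_mono) auto
    then show False using q2 by simp
  qed
  obtain l where l: "m = Suc l" using m by (cases m) auto
  have qml: "q * q^l = 2" using qm l by simp
  have Sm: "Sg m q = 1 + q * Sg l q" using Sg_shift1[of q l] l by simp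
  have Sl: "Sg l q \<le> real l * q^(l-1)" using Sg_le[of q l] q1 by simp
  have "q * (real l * q^(l-1)) = real l * q^l" using l m by (cases l) auto
  moreover have "q * Sg l q \<le> q * (real l * q^(l-1))" by (rule mult_left_mono[OF Sl]) (use q1 in simp)
  ultimately have Sm': "Sg m q \<le> 1 + real l * q^l"
    using Sm by linarith
  have Sn: "Sg n q = Sg m q + q^m + q^(m+1)"
    using Sg_shift2[of m q] Sg_shift2[of "Suc m" q] m by simp
  have ql: "q^l = 2 / q" using qml q1 by (simp add: field_simps)
  have key: "(q-1)*(2*real m - 2*q - 1) + 1 > 0"
  proof -
    have "2*real m - 2*q - 1 > 0" using m q32 by simp
    then have "(q-1)*(2*real m - 2*q - 1) > 0" using q1 by simp
    then show ?thesis by simp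
  qed
  have "Sg n q \<le> 1 + real l * (2/q) + 2 + 2*q"
    using Sn Sm' ql qm by simp
  also have "\<dots> < real n * 2"
  proof -
    have "real l = real m - 1" using l by simp
    have "(1 + (real m - 1) * (2/q) + 2 + 2*q) * q = 3*q + 2*real m - 2 + 2*q*q"
      using q1 by (simp add: field_simps)
    also have "\<dots> < (real m + 2) * 2 * q"
      using key by (simp add: algebra_simps)
    finally have "(1 + (real m - 1) * (2/q) + 2 + 2*q) * q < (real m + 2) * 2 * q" .
    then have "1 + (real m - 1) * (2/q) + 2 + 2*q < (real m + 2) * 2"
      using q1 by simp
    then show ?thesis using l m by simp
  qed
  finally have "Sg n q < real n * q^m" using qm by simp
  then have "Sg n q * q^2 < real n * q^m * q^2" using q1 by simp
  also have "real n * q^m * q^2 = real n * q^n" using m by (simp add: power_add power2_eq_square)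
  finally show ?thesis using q1 by (intro exI[of _ q]) simp
qed

theorem corollary2p6:
  fixes n :: nat
  assumes "n \<ge> 1"
  shows "n \<le> 3 \<longleftrightarrow>
    (\<forall>j \<in> {1..n+2}.
       (\<forall>lam > 1 / real n. lambda_reg n j lam - 1 / real n \<ge> 0) \<or>
       (\<forall>lam > 1 / real n. lambda_reg n j lam - 1 / real n \<le> 0))"
proof -
  have eq: "((\<forall>lam > 1 / real n. lambda_reg n j lam - 1 / real n \<ge> 0) \<or>
       (\<forall>lam > 1 / real n. lambda_reg n j lam - 1 / real n \<le> 0)) \<longleftrightarrow>
       ((\<forall>q>1. Sg n q * q^(j-1) \<le> real n * q^n) \<or> (\<forall>q>1. real n * q^n \<le> Sg n q * q^(j-1)))"
    if j: "j \<ge> 1" for j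
  proof -
    have a: "(\<forall>lam > 1 / real n. lambda_reg n j lam - 1 / real n \<ge> 0) \<longleftrightarrow> (\<forall>q>1. V n j q - 1 / real n \<ge> 0)"
      using all_lam_iff[OF assms j, of "\<lambda>x. x - 1 / real n \<ge> 0"] by simp
    have b: "(\<forall>lam > 1 / real n. lambda_reg n j lam - 1 / real n \<le> 0) \<longleftrightarrow> (\<forall>q>1. V n j q - 1 / real n \<le> 0)"
      using all_lam_iff[OF assms j, of "\<lambda>x. x - 1 / real n \<le> 0"] by simp
    have c: "(\<forall>q>1. V n j q - 1 / real n \<ge> 0) \<longleftrightarrow> (\<forall>q>1. Sg n q * q^(j-1) \<le> real n * q^n)"
      using V_cmp(1)[OF _ assms] by (auto simp del: of_nat_le_iff)
    have d: "(\<forall>q>1. V n j q - 1 / real n \<le> 0) \<longleftrightarrow> (\<forall>q>1. real n * q^n \<le> Sg n q * q^(j-1))"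
      using V_cmp(2)[OF _ assms] by (auto simp del: of_nat_le_iff)
    show ?thesis using a b c d by simp
  qed
  show ?thesis
  proof
    assume n3: "n \<le> 3"
    show "\<forall>j \<in> {1..n+2}.
       (\<forall>lam > 1 / real n. lambda_reg n j lam - 1 / real n \<ge> 0) \<or>
       (\<forall>lam > 1 / real n. lambda_reg n j lam - 1 / real n \<le> 0)"
    proof
      fix j assume j: "j \<in> {1..n+2}"
      then have j1: "j \<ge> 1" by simp
      have "(\<forall>q>1. Sg n q * q^(j-1) \<le> real n * q^n) \<or> (\<forall>q>1. real n * q^n \<le> Sg n q * q^(j-1))"
      proof (cases "j \<le> 2")
        case True then show ?thesis using small_j[OF _ assms] by blast
      next
        case False
        show ?thesis
        proof (cases "j \<ge> n+1")
          case True then show ?thesis using big_j[OF _ assms] by blast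
        next
          case False2: False
          then have "n = 3" "j = 3" using False n3 j by auto
          then show ?thesis using n3j3 by auto
        qed
      qed
      then show "(\<forall>lam > 1 / real n. lambda_reg n j lam - 1 / real n \<ge> 0) \<or>
       (\<forall>lam > 1 / real n. lambda_reg n j lam - 1 / real n \<le> 0)" using eq[OF j1] by simp
    qed
  next
    assume h: "\<forall>j \<in> {1..n+2}.
       (\<forall>lam > 1 / real n. lambda_reg n j lam - 1 / real n \<ge> 0) \<or>
       (\<forall>lam > 1 / real n. lambda_reg n j lam - 1 / real n \<le> 0)"
    show "n \<le> 3"
    proof (rule ccontr)
      assume "\<not> n \<le> 3"
      then have n4: "n \<ge> 4" by simp
      have "3 \<in> {1..n+2}" using n4 by simp
      then have "(\<forall>q>1. Sg n q * q^(3-1) \<le> real n * q^n) \<or> (\<forall>q>1. real n * q^n \<le> Sg n q * q^(3-1))"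
        using h eq[of 3] by simp
      moreover obtain q where "q > 1" "Sg n q * q^(3-1) < real n * q^n" using big_n_pos[OF n4] by blast
      moreover have "real n > 1" using n4 by simp
      ultimately show False using big_n_neg[OF n4]
        by (metis not_le)
    qed
  qed
qed

end
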